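(* Let $k,n$ be integers with $k\geq 3$ and $n\geq 2$, and let $c$ be an exact $k$-coloring of $\mathcal{B}_n$. Then $\mathcal{B}_n$ contains no rainbow induced copy of $\vee_2$ if and only if one of the following holds: (1) There exists a set $A\subseteq[n]$ with $|A|\leq n-2$ such that each of the three families $\mathcal{B}_{(A,[n])}$, $\mathcal{B}_n\setminus\mathcal{B}_{[A,[n]]}$, and $\{A\}$ is monochromatic, and no two sets from different ones of these families share a color; moreover, if $k=3$ the color of $[n]$ is unrestricted, and if $k=4$ then $[n]$ receives a color different from all colors used on $\mathcal{B}_{[\emptyset,[n])}$. (2) Exactly two colors appear on $\mathcal{B}_{[\emptyset,[n])}$, and $[n]$ receives a color distinct from these two.
   Context: $\mathcal{B}_n$ denotes the Boolean lattice of all subsets of $[n]$ ordered by inclusion. For $X\subseteq Y$: $\mathcal{B}_{[X,Y]}=\{Z: X\subseteq Z\subseteq Y\}$, $\mathcal{B}_{(X,Y]}=\{Z:X\subsetneq Z\subseteq Y\}$, $\mathcal{B}_{[X,Y)}=\{Z:X\subseteq Z\subsetneq Y\}$, $\mathcal{B}_{(X,Y)}=\{Z:X\subsetneq Z\subsetneq Y\}$. An exact $k$-coloring is a surjective map $\mathcal{B}_n\to[k]$. $\vee_2$ is the poset $\{X_0,X_1,X_2\}$ with $X_0<X_1$, $X_0<X_2$, $X_1,X_2$ incomparable; a rainbow induced copy of $\vee_2$ is three sets $X_0\subsetneq X_1$, $X_0\subsetneq X_2$ with $X_1,X_2$ incomparable and pairwise distinct colors. *)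

theory Defs
  imports Main
begin

definition Bool_lat :: "nat \<Rightarrow> nat set set" where
  "Bool_lat n = Pow {1..n}"

definition interval_cc :: "nat set \<Rightarrow> nat set \<Rightarrow> nat set set" where
  "interval_cc X Y = {Z. X \<subseteq> Z \<and> Z \<subseteq> Y}"
definition interval_oc :: "nat set \<Rightarrow> nat set \<Rightarrow> nat set set" where
  "interval_oc X Y = {Z. X \<subset> Z \<and> Z \<subseteq> Y}"
definition interval_co :: "nat set \<Rightarrow> nat set \<Rightarrow> nat set set" where
  "interval_co X Y = {Z. X \<subseteq> Z \<and> Z \<subset> Y}"
definition interval_oo :: "nat set \<Rightarrow> nat set \<Rightarrow> nat set set" where
  "interval_oo X Y = {Z. X \<subset> Z \<and> Z \<subset> Y}"

text \<open>An exact k-coloring of B_n: a map onto [k] (values outside B_n are irrelevant).\<close>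
definition exact_coloring :: "nat \<Rightarrow> nat \<Rightarrow> (nat set \<Rightarrow> nat) \<Rightarrow> bool" where
  "exact_coloring n k c \<longleftrightarrow> c ` Bool_lat n = {1..k}"

definition monochromatic :: "(nat set \<Rightarrow> nat) \<Rightarrow> nat set set \<Rightarrow> bool" where
  "monochromatic c F \<longleftrightarrow> (\<forall>X\<in>F. \<forall>Y\<in>F. c X = c Y)"

definition has_rainbow_V2 :: "nat \<Rightarrow> (nat set \<Rightarrow> nat) \<Rightarrow> bool" where
  "has_rainbow_V2 n c \<longleftrightarrow>
     (\<exists>X0\<in>Bool_lat n. \<exists>X1\<in>Bool_lat n. \<exists>X2\<in>Bool_lat n.
        X0 \<subset> X1 \<and> X0 \<subset> X2 \<and> \<not> X1 \<subseteq> X2 \<and> \<not> X2 \<subseteq> X1 \<and>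
        c X0 \<noteq> c X1 \<and> c X0 \<noteq> c X2 \<and> c X1 \<noteq> c X2)"

end

theory Submission
  imports Defs
begin

lemma two_avoid:
  assumes "finite S" "3 \<le> card S"
  shows "\<exists>x\<in>S. x \<noteq> a \<and> x \<noteq> b"
proof (rule ccontr)
  assume "\<not> ?thesis"
  then have "S \<subseteq> {a, b}" by blast
  then have "card S \<le> card {a, b}" by (intro card_mono) auto
  also have "\<dots> \<le> 2" by (simp add: card_insert_if)
  finally show False using assms by simp
qed

definition noV2 :: "nat set \<Rightarrow> (nat set \<Rightarrow> nat) \<Rightarrow> bool" where
  "noV2 N c \<longleftrightarrow> (\<forall>X1 X2 Z. X1 \<subseteq> N \<and> X2 \<subseteq> N \<and> \<not> X1 \<subseteq> X2 \<and> \<not> X2 \<subseteq> X1 \<and>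
        c X1 \<noteq> c X2 \<and> Z \<subseteq> X1 \<and> Z \<subseteq> X2 \<longrightarrow> c Z = c X1 \<or> c Z = c X2)"

lemma noV2D:
  assumes "noV2 N c"
  shows "\<And>X1 X2 Z. X1 \<subseteq> N \<Longrightarrow> X2 \<subseteq> N \<Longrightarrow> \<not> X1 \<subseteq> X2 \<Longrightarrow> \<not> X2 \<subseteq> X1 \<Longrightarrow>
        c X1 \<noteq> c X2 \<Longrightarrow> Z \<subseteq> X1 \<Longrightarrow> Z \<subseteq> X2 \<Longrightarrow> c Z = c X1 \<or> c Z = c X2"
  using assms unfolding noV2_def by blast

lemma caseA:
  fixes N :: "nat set" and c :: "nat set \<Rightarrow> nat"
  assumes nrH: "noV2 N c"
    and same: "\<forall>i\<in>N. c (N - {i}) = \<alpha>"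
    and X: "X \<subset> N" "c X \<noteq> \<alpha>" and Y: "Y \<subset> N" "c Y \<noteq> \<alpha>" and XY: "c X \<noteq> c Y"
  shows False
proof -
  note nr = noV2D[OF nrH]
  have F: "c Z = c W \<or> c Z = \<alpha>" if W: "W \<subset> N" "c W \<noteq> \<alpha>" "i \<in> W" "Z \<subseteq> W - {i}" for W Z i
  proof -
    have iN: "i \<in> N" using W by auto
    have "\<not> W \<subseteq> N - {i}" using W by auto
    moreover have "\<not> N - {i} \<subseteq> W" using W iN by auto
    ultimately show ?thesis using nr[of W "N - {i}" Z] W same iN by auto
  qed
  show False
  proof (cases "X = {}")
    case True
    then have "Y \<noteq> {}" using XY by auto
    then obtain i where "i \<in> Y" by auto
    then show False using F[of Y i "{}"] Y True XY X by auto
  next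
    case Xne: False
    show False
    proof (cases "Y = {}")
      case True
      then obtain i where "i \<in> X" using Xne by auto
      then show False using F[of X i "{}"] X True XY Y by auto
    next
      case Yne: False
      obtain i where i: "i \<in> X" using Xne by auto
      obtain j where j: "j \<in> Y" using Yne by auto
      have e: "c {} = \<alpha>" using F[of X i "{}"] F[of Y j "{}"] X Y i j XY by auto
      show False
      proof (cases "X \<subseteq> Y")
        case True
        then obtain l where "l \<in> Y" "l \<notin> X" using XY by (metis subsetI subset_antisym)
        then show False using F[of Y l X] Y X XY True by auto
      next
        case nXY: False
        show False
        proof (cases "Y \<subseteq> X")
          case True
          then obtain l where "l \<in> X" "l \<notin> Y" using XY by (metis subsetI subset_antisym)
          then show False using F[of X l Y] Y X XY True by auto
        next
          case False
          then show False using nr[of X Y "{}"] nXY X Y XY e by auto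
        qed
      qed
    qed
  qed
qed

lemma caseB:
  fixes N :: "nat set" and c :: "nat set \<Rightarrow> nat"
  assumes fin: "finite N"
    and nrH: "noV2 N c"
    and i0: "i0 \<in> N" "j0 \<in> N" "c (N - {i0}) \<noteq> c (N - {j0})"
    and three: "3 \<le> card (c ` {Z. Z \<subset> N})"
  shows "\<exists>A \<alpha> \<gamma>. A \<subset> N \<and> card A + 2 \<le> card N \<and>
     (\<forall>X. A \<subset> X \<and> X \<subset> N \<longrightarrow> c X = \<alpha>) \<and>
     (\<forall>X. X \<subseteq> N \<and> \<not> A \<subseteq> X \<longrightarrow> c X = \<gamma>) \<and>
     \<alpha> \<noteq> \<gamma> \<and> c A \<noteq> \<alpha> \<and> c A \<noteq> \<gamma>"
proof -
  note nr = noV2D[OF nrH]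
  have coinc: "\<not> (N - {i}) \<subseteq> (N - {j})" if "i \<in> N" "j \<in> N" "i \<noteq> j" for i j
    using that by auto
  have "i0 \<noteq> j0" using i0 by auto
  then have g0: "c {} = c (N - {i0}) \<or> c {} = c (N - {j0})"
    using nr[of "N - {i0}" "N - {j0}" "{}"] i0 coinc by auto
  obtain i1 j1 where ij1: "i1 \<in> N" "j1 \<in> N" "c (N - {i1}) = c {}" "c (N - {j1}) \<noteq> c {}"
    using g0 i0 by metis
  define \<gamma> where "\<gamma> = c {}"
  define \<alpha> where "\<alpha> = c (N - {j1})"
  have ag: "\<alpha> \<noteq> \<gamma>" using ij1 \<alpha>_def \<gamma>_def by auto
  have ij: "i1 \<noteq> j1" using ij1 by auto
  have coat: "c (N - {l}) = \<gamma> \<or> c (N - {l}) = \<alpha>" if l: "l \<in> N" for l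
  proof (rule ccontr)
    assume h: "\<not> ?thesis"
    then have "l \<noteq> j1" using \<alpha>_def by auto
    then show False using nr[of "N - {l}" "N - {j1}" "{}"] coinc[of l j1] coinc[of j1 l] l ij1 h
      \<alpha>_def \<gamma>_def by auto
  qed
  define A where "A = {i\<in>N. c (N - {i}) = \<gamma>}"
  have j1A: "j1 \<notin> A" using A_def ag \<alpha>_def by auto
  have AN: "A \<subseteq> N" using A_def by auto
  have key: "X = A" if X: "X \<subset> N" "c X \<noteq> \<gamma>" "c X \<noteq> \<alpha>" for X
  proof -
    have sub: "X \<subseteq> A"
    proof
      fix i assume iX: "i \<in> X"
      then have iN: "i \<in> N" using X by auto
      have "\<not> X \<subseteq> N - {i}" using iX by auto
      moreover have "\<not> N - {i} \<subseteq> X" using X iX iN by auto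
      moreover have "c X \<noteq> c (N - {i})" using coat[OF iN] X by auto
      ultimately have "c {} = c X \<or> c {} = c (N - {i})"
        using nr[of X "N - {i}" "{}"] X iN by auto
      then show "i \<in> A" using A_def iN X \<gamma>_def by auto
    qed
    have sup: "A \<subseteq> X"
    proof
      fix i assume iA: "i \<in> A"
      show "i \<in> X"
      proof (rule ccontr)
        assume iX: "i \<notin> X"
        have "j1 \<notin> X" using sub j1A by auto
        have ci: "c (N - {i}) = \<gamma>" "i \<in> N" using iA A_def by auto
        have "i \<noteq> j1" using iA j1A by auto
        then have "c X = c (N - {i}) \<or> c X = c (N - {j1})"
          using nr[of "N - {i}" "N - {j1}" X] coinc[of i j1] coinc[of j1 i] ci ij1 ag \<alpha>_def
            iX \<open>j1 \<notin> X\<close> X by auto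
        then show False using X ci \<alpha>_def by auto
      qed
    qed
    show ?thesis using sub sup by auto
  qed
  have "finite {Z. Z \<subset> N}" by (rule finite_subset[of _ "Pow N"]) (use fin in auto)
  then have finP: "finite (c ` {Z. Z \<subset> N})" by simp
  obtain x where x: "x \<in> c ` {Z. Z \<subset> N}" "x \<noteq> \<gamma>" "x \<noteq> \<alpha>"
    using two_avoid[OF finP three, of \<gamma> \<alpha>] by blast
  from x(1) obtain X0 where X0': "X0 \<subset> N" "x = c X0" by blast
  have X0: "X0 \<subset> N" "c X0 \<noteq> \<gamma>" "c X0 \<noteq> \<alpha>" using X0' x by auto
  have AX0: "A = X0" using key[OF X0] by simp
  have Ap: "A \<subset> N" and cA: "c A \<noteq> \<gamma>" "c A \<noteq> \<alpha>" using X0 AX0 by auto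
  have card2: "2 \<le> card (N - A)"
  proof -
    have ne: "N - A \<noteq> {}" using j1A ij1 by auto
    have "\<not> (\<exists>j. N - A = {j})"
    proof
      assume "\<exists>j. N - A = {j}"
      then obtain j where j: "N - A = {j}" by auto
      then have "A = N - {j}" "j \<in> N" using AN by auto
      then show False using coat cA by metis
    qed
    moreover have "finite (N - A)" using fin by auto
    ultimately show ?thesis using ne
      by (metis One_nat_def card_0_eq card_1_singleton_iff less_2_cases not_le_imp_less)
  qed
  have cardA: "card A + 2 \<le> card N"
    using card2 card_Diff_subset[of A N] AN fin finite_subset[OF AN fin] card_mono[OF fin AN] by auto
  have up: "\<forall>X. A \<subset> X \<and> X \<subset> N \<longrightarrow> c X = \<alpha>"
  proof (intro allI impI)
    fix X assume X: "A \<subset> X \<and> X \<subset> N"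
    show "c X = \<alpha>"
    proof (rule ccontr)
      assume h: "c X \<noteq> \<alpha>"
      then have cg: "c X = \<gamma>" using key[of X] X by auto
      obtain j where j: "j \<in> X" "j \<notin> A" using X by auto
      have jN: "j \<in> N" using j X by auto
      have cj: "c (N - {j}) = \<alpha>" using coat[OF jN] j A_def jN by auto
      have "\<not> X \<subseteq> N - {j}" using j by auto
      moreover have "\<not> N - {j} \<subseteq> X" using X j jN by auto
      ultimately have "c A = c X \<or> c A = c (N - {j})"
        using nr[of X "N - {j}" A] X cj cg ag j AN by auto
      then show False using cA cg cj by auto
    qed
  qed
  have down: "\<forall>X. X \<subseteq> N \<and> \<not> A \<subseteq> X \<longrightarrow> c X = \<gamma>"
  proof (intro allI impI)
    fix X assume X: "X \<subseteq> N \<and> \<not> A \<subseteq> X"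
    then have XN: "X \<subset> N" using AN by auto
    show "c X = \<gamma>"
    proof (rule ccontr)
      assume h: "c X \<noteq> \<gamma>"
      then have ca: "c X = \<alpha>" using key[OF XN] X by auto
      show False
      proof (cases "X \<subseteq> A")
        case False
        then show False using nr[of X A "{}"] X AN ca cA ag \<gamma>_def by auto
      next
        case True
        obtain i where i: "i \<in> A" "i \<notin> X" using X by auto
        have ci: "c (N - {i}) = \<gamma>" "i \<in> N" using i A_def by auto
        have "\<not> A \<subseteq> N - {i}" using i by auto
        moreover have "\<not> N - {i} \<subseteq> A" using j1A ij1 i by auto
        ultimately have "c X = c A \<or> c X = c (N - {i})"
          using nr[of A "N - {i}" X] AN ci cA True i by auto
        then show False using ca ci cA ag by auto
      qed
    qed
  qed
  show ?thesis using Ap cardA up down ag cA by blast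
qed

theorem theorem2p3:
  fixes k n :: nat and c :: "nat set \<Rightarrow> nat"
  assumes "k \<ge> 3" and "n \<ge> 2" and "exact_coloring n k c"
  shows "\<not> has_rainbow_V2 n c \<longleftrightarrow>
    ((\<exists>A. A \<subseteq> {1..n} \<and> card A \<le> n - 2 \<and>
        monochromatic c (interval_oo A {1..n}) \<and>
        monochromatic c (Bool_lat n - interval_cc A {1..n}) \<and>
        monochromatic c {A} \<and>
        (\<forall>X\<in>interval_oo A {1..n}. \<forall>Y\<in>Bool_lat n - interval_cc A {1..n}. c X \<noteq> c Y) \<and>
        (\<forall>X\<in>interval_oo A {1..n}. c X \<noteq> c A) \<and>
        (\<forall>Y\<in>Bool_lat n - interval_cc A {1..n}. c Y \<noteq> c A) \<and>
        (k = 4 \<longrightarrow> c {1..n} \<notin> c ` interval_co {} {1..n}))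
     \<or>
     (card (c ` interval_co {} {1..n}) = 2 \<and> c {1..n} \<notin> c ` interval_co {} {1..n}))" (is "?H \<longleftrightarrow> ?L \<or> ?R")
proof -
  define N where "N = {1..n}"
  have finN: "finite N" and cardN: "card N = n" using N_def by auto
  have P: "interval_co {} {1..n} = {Z. Z \<subset> N}" unfolding interval_co_def N_def by auto
  have finPs: "finite {Z. Z \<subset> N}" by (rule finite_subset[of _ "Pow N"]) (use finN in auto)
  have powN: "Pow N = insert N {Z. Z \<subset> N}" by auto
  have colors: "insert (c N) (c ` {Z. Z \<subset> N}) = {1..k}"
    using assms(3) powN unfolding exact_coloring_def Bool_lat_def N_def by (metis image_insert)
  have cardk: "card {1..k} = k" by simp
  show ?thesis
  proof
    assume nrv: "\<not> has_rainbow_V2 n c"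
    have nr: "c Z = c X1 \<or> c Z = c X2" if "X1 \<subseteq> N" "X2 \<subseteq> N" "\<not> X1 \<subseteq> X2" "\<not> X2 \<subseteq> X1"
        "c X1 \<noteq> c X2" "Z \<subseteq> X1" "Z \<subseteq> X2" for X1 X2 Z
    proof (rule ccontr)
      assume "\<not> ?thesis"
      moreover have "Z \<subset> X1" "Z \<subset> X2" using that by auto
      moreover have "Z \<in> Bool_lat n" "X1 \<in> Bool_lat n" "X2 \<in> Bool_lat n"
        using that N_def unfolding Bool_lat_def by auto
      ultimately have "has_rainbow_V2 n c" unfolding has_rainbow_V2_def
        using that by (intro bexI[of _ Z] bexI[of _ X1] bexI[of _ X2] conjI) auto
      then show False using nrv by simp
    qed
    have nrH: "noV2 N c" unfolding noV2_def using nr by blast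
    have finC: "finite (c ` {Z. Z \<subset> N})" using finPs by simp
    have "k \<le> card (c ` {Z. Z \<subset> N}) + 1"
      using card_insert_if[OF finC, of "c N"] colors cardk by (auto split: if_splits)
    then have ge2: "2 \<le> card (c ` {Z. Z \<subset> N})" using assms(1) by simp
    show "?L \<or> ?R"
    proof (cases "3 \<le> card (c ` {Z. Z \<subset> N})")
      case False
      then have c2: "card (c ` {Z. Z \<subset> N}) = 2" using ge2 by simp
      have cnot: "c N \<notin> c ` {Z. Z \<subset> N}"
      proof
        assume "c N \<in> c ` {Z. Z \<subset> N}"
        then have "c ` {Z. Z \<subset> N} = {1..k}" using colors by (simp add: insert_absorb)
        then show False using c2 cardk assms(1) by simp
      qed
      have "?R" unfolding P using c2 cnot unfolding N_def by simp
      then show ?thesis by simp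
    next
      case three: True
      show ?thesis
      proof (cases "\<exists>i0\<in>N. \<exists>j0\<in>N. c (N - {i0}) \<noteq> c (N - {j0})")
        case True
        then obtain i0 j0 where ij: "i0 \<in> N" "j0 \<in> N" "c (N - {i0}) \<noteq> c (N - {j0})" by blast
        obtain A \<alpha> \<gamma> where A: "A \<subset> N" "card A + 2 \<le> card N"
          "\<forall>X. A \<subset> X \<and> X \<subset> N \<longrightarrow> c X = \<alpha>"
          "\<forall>X. X \<subseteq> N \<and> \<not> A \<subseteq> X \<longrightarrow> c X = \<gamma>"
          "\<alpha> \<noteq> \<gamma>" "c A \<noteq> \<alpha>" "c A \<noteq> \<gamma>"
          using caseB[of N c i0 j0, OF finN nrH ij three] by (elim exE conjE) (rule that; assumption)
        have sub: "c ` {Z. Z \<subset> N} \<subseteq> {\<alpha>, \<gamma>, c A}"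
        proof
          fix x assume "x \<in> c ` {Z. Z \<subset> N}"
          then obtain Z where Z: "Z \<subset> N" "x = c Z" by auto
          show "x \<in> {\<alpha>, \<gamma>, c A}"
          proof (cases "A \<subseteq> Z")
            case True
            then show ?thesis using A(3) Z by (cases "A = Z") auto
          next
            case False
            then show ?thesis using A(4) Z by auto
          qed
        qed
        have k4: "c N \<notin> c ` {Z. Z \<subset> N}" if "k = 4"
        proof
          assume "c N \<in> c ` {Z. Z \<subset> N}"
          then have "c ` {Z. Z \<subset> N} = {1..k}" using colors by (simp add: insert_absorb)
          then have "{1..k} \<subseteq> {\<alpha>, \<gamma>, c A}" using sub by simp
          then have "card {1..k} \<le> card {\<alpha>, \<gamma>, c A}" by (intro card_mono) auto
          also have "\<dots> \<le> 3" by (simp add: card_insert_if)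
          finally show False using cardk that by simp
        qed
        have oo: "interval_oo A {1..n} = {X. A \<subset> X \<and> X \<subset> N}" unfolding interval_oo_def N_def by auto
        have cc: "Bool_lat n - interval_cc A {1..n} = {X. X \<subseteq> N \<and> \<not> A \<subseteq> X}"
          unfolding Bool_lat_def interval_cc_def N_def by auto
        have c1: "monochromatic c (interval_oo A {1..n})" unfolding monochromatic_def oo using A(3) by simp
        have c2: "monochromatic c (Bool_lat n - interval_cc A {1..n})" unfolding monochromatic_def cc using A(4) by simp
        have c3: "monochromatic c {A}" unfolding monochromatic_def by simp
        have c4: "\<forall>X\<in>interval_oo A {1..n}. \<forall>Y\<in>Bool_lat n - interval_cc A {1..n}. c X \<noteq> c Y"
          unfolding oo cc using A(3,4,5) by simp
        have c5: "\<forall>X\<in>interval_oo A {1..n}. c X \<noteq> c A" unfolding oo using A(3,6) by simp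
        have c6: "\<forall>Y\<in>Bool_lat n - interval_cc A {1..n}. c Y \<noteq> c A" unfolding cc using A(4,7) by simp
        have c7: "A \<subseteq> {1..n}" using A N_def by auto
        have c8: "card A \<le> n - 2" using A cardN by simp
        have c9: "k = 4 \<longrightarrow> c {1..n} \<notin> c ` interval_co {} {1..n}" using k4 N_def P by simp
        have "?L" using c1 c2 c3 c4 c5 c6 c7 c8 c9 by (intro exI[of _ A] conjI)
        then show ?thesis by simp
      next
        case False
        have oneN: "1 \<in> N" using N_def assms(2) by simp
        define \<alpha> where "\<alpha> = c (N - {1})"
        have same: "\<forall>i\<in>N. c (N - {i}) = \<alpha>" using False oneN unfolding \<alpha>_def by blast
        obtain x where x: "x \<in> c ` {Z. Z \<subset> N}" "x \<noteq> \<alpha>"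
          using two_avoid[OF finC three, of \<alpha> \<alpha>] by blast
        obtain y where y: "y \<in> c ` {Z. Z \<subset> N}" "y \<noteq> \<alpha>" "y \<noteq> x"
          using two_avoid[OF finC three, of \<alpha> x] by blast
        obtain X where X: "X \<subset> N" "c X = x" using x by auto
        obtain Y where Y: "Y \<subset> N" "c Y = y" using y by auto
        have False by (rule caseA[of N c \<alpha> X Y, OF nrH same]) (use X Y x y in auto)
        then show ?thesis by simp
      qed
    qed
  next
    assume LR: "?L \<or> ?R"
    show "\<not> has_rainbow_V2 n c"
    proof
      assume "has_rainbow_V2 n c"
      then obtain X0 X1 X2 where X: "X0 \<subseteq> N" "X1 \<subseteq> N" "X2 \<subseteq> N" "X0 \<subset> X1" "X0 \<subset> X2"
        "\<not> X1 \<subseteq> X2" "\<not> X2 \<subseteq> X1" "c X0 \<noteq> c X1" "c X0 \<noteq> c X2" "c X1 \<noteq> c X2"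
        unfolding has_rainbow_V2_def Bool_lat_def N_def by blast
      have Xp: "X0 \<subset> N" "X1 \<subset> N" "X2 \<subset> N" using X by auto
      show False
      proof (cases "?R")
        case True
        have "{c X0, c X1, c X2} \<subseteq> c ` {Z. Z \<subset> N}" using Xp by auto
        then have "card {c X0, c X1, c X2} \<le> card (c ` {Z. Z \<subset> N})"
          using finPs by (intro card_mono) auto
        then show False using True X unfolding P by simp
      next
        case False
        have "?L" using LR False by (elim disjE) (assumption, erule notE, assumption)
        then obtain A where
          m1': "monochromatic c (interval_oo A {1..n})" and
          m2': "monochromatic c (Bool_lat n - interval_cc A {1..n})"
          by (elim exE conjE) (rule that; assumption)
        have m1: "\<forall>X\<in>interval_oo A {1..n}. \<forall>Y\<in>interval_oo A {1..n}. c X = c Y"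
          using m1' unfolding monochromatic_def .
        have m2: "\<forall>X\<in>Bool_lat n - interval_cc A {1..n}. \<forall>Y\<in>Bool_lat n - interval_cc A {1..n}. c X = c Y"
          using m2' unfolding monochromatic_def .
        have oo: "interval_oo A {1..n} = {X. A \<subset> X \<and> X \<subset> N}" unfolding interval_oo_def N_def by auto
        have cc: "Bool_lat n - interval_cc A {1..n} = {X. X \<subseteq> N \<and> \<not> A \<subseteq> X}"
          unfolding Bool_lat_def interval_cc_def N_def by auto
        have M1: "c X = c Y" if "A \<subset> X" "X \<subset> N" "A \<subset> Y" "Y \<subset> N" for X Y
          using m1 that unfolding oo by blast
        have M2: "c X = c Y" if "X \<subseteq> N" "\<not> A \<subseteq> X" "Y \<subseteq> N" "\<not> A \<subseteq> Y" for X Y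
          using m2 that unfolding cc by blast
        show False
        proof (cases "A \<subseteq> X0")
          case True
          then have "A \<subset> X1" "A \<subset> X2" using X(4,5) by (blast intro: subset_psubset_trans)+
          then show False using M1[of X1 X2] X(10) Xp by auto
        next
          case n0: False
          show False
          proof (cases "A \<subseteq> X1")
            case False
            then show False using M2[of X0 X1] n0 X by auto
          next
            case a1: True
            show False
            proof (cases "A \<subseteq> X2")
              case False
              then show False using M2[of X0 X2] n0 X by auto
            next
              case a2: True
              show False
              proof (cases "A = X1")
                case True then show False using a2 X by auto
              next
                case f1: False
                show False
                proof (cases "A = X2")
                  case True then show False using a1 X by auto
                next
                  case False
                  then show False using M1[of X1 X2] a1 a2 f1 Xp X by auto
                qed
              qed
            qed
          qed
        qed
      qed
    qed
  qed
qed

end
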